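(* Fix a material point and let $T>0$. Let $t\mapsto\bm C(t)$, $t\in[0,T]$, be a smooth curve of symmetric positive-definite tensors, and for $\alpha=1,\dots,m$ let $t\mapsto\bm\Gamma^\alpha(t)$ be the solution on $[0,T]$ of $$\eta^\alpha\frac{d\bm\Gamma^\alpha}{dt}=\tilde{\bm S}^\alpha_{\mathrm{iso}}(\tilde{\bm C}(t))-\hat{\bm S}^\alpha_0-\mu^\alpha(\bm\Gamma^\alpha-\bm I)$$ with a given symmetric initial value, where $\tilde{\bm C}(t)=\det(\bm C(t))^{-1/3}\bm C(t)$. For $t_n\in[0,T)$ and $0<\Delta t_n\le T-t_n$ set $\bm C_n:=\bm C(t_n)$, $\bm C_{n+1}:=\bm C(t_n+\Delta t_n)$, $\bm\Gamma^\alpha_n:=\bm\Gamma^\alpha(t_n)$, $\bm\Gamma^\alpha_{n+1}:=\bm\Gamma^\alpha(t_n+\Delta t_n)$, $\bm\Gamma^\alpha_{n+\frac12}:=\frac12(\bm\Gamma^\alpha_n+\bm\Gamma^\alpha_{n+1})$, $\bm C_{n+\frac12}:=\frac12(\bm C_n+\bm C_{n+1})$, $\tilde{\bm C}_k:=\det(\bm C_k)^{-1/3}\bm C_k$, $\bm Z_n:=(\bm C_{n+1}-\bm C_n)/2$, $\bm S_{\mathrm{iso}\,n+\frac12}:=\bm S_{\mathrm{iso}}(\bm C_{n+\frac12},\bm\Gamma^1_{n+\frac12},\dots,\bm\Gamma^m_{n+\frac12})$, and $$\bm S_{\mathrm{iso\,enh1}}:=\frac{G_{\mathrm{iso}}(\tilde{\bm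 C}_{n+1},\bm\Gamma^1_{n+1},\dots,\bm\Gamma^m_{n+1})-G_{\mathrm{iso}}(\tilde{\bm C}_{n},\bm\Gamma^1_{n+1},\dots,\bm\Gamma^m_{n+1})-\bm S_{\mathrm{iso}\,n+\frac12}:\bm Z_n}{|\bm Z_n|^2}\bm Z_n$$ (and $\bm S_{\mathrm{iso\,enh1}}:=\bm 0$ if $\bm Z_n=\bm 0$). Then $\bm S_{\mathrm{iso\,enh1}}$ is asymptotically first order in $\Delta t_n$: there are constants $K>0$ and $\delta>0$, independent of $t_n$ and $\Delta t_n$, such that $|\bm S_{\mathrm{iso\,enh1}}|\le K\Delta t_n$ whenever $0<\Delta t_n\le\delta$.
   Context: $|\bm A|=(\bm A:\bm A)^{1/2}$; $\bm I$ the identity tensor. Material model: fix $m\ge1$; for each $\alpha$: $\mu^\alpha>0$, $\eta^\alpha>0$, constant symmetric tensor $\hat{\bm S}^\alpha_0$, smooth scalar function $G^\alpha$ on symmetric positive-definite tensors with $\tilde{\bm S}^\alpha_{\mathrm{iso}}(\tilde{\bm C}):=2\partial G^\alpha/\partial\tilde{\bm C}$; $G^\infty_{\mathrm{iso}}$ smooth. $\Upsilon^\alpha(\tilde{\bm C},\bm\Gamma):=\frac{1}{4\mu^\alpha}|\tilde{\bm S}^\alpha_{\mathrm{iso}}(\tilde{\bm C})-\hat{\bm S}^\alpha_0-\mu^\alpha(\bm\Gamma-\bm I)|^2$; $G_{\mathrm{iso}}(\tilde{\bm C},\bm\Gamma^1,\dots,\bm\Gamma^m):=G^\infty_{\mathrm{iso}}(\tilde{\bm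 C})+\sum_\alpha\Upsilon^\alpha(\tilde{\bm C},\bm\Gamma^\alpha)$. For symmetric positive-definite $\bm C$, with $\tilde{\bm C}=\det(\bm C)^{-1/3}\bm C$ and $\tilde{\bm S}:=2\partial G_{\mathrm{iso}}/\partial\tilde{\bm C}$ (at fixed $\bm\Gamma^\alpha$) evaluated at $(\tilde{\bm C},\bm\Gamma^1,\dots,\bm\Gamma^m)$, the isochoric second Piola–Kirchhoff stress is $\bm S_{\mathrm{iso}}(\bm C,\bm\Gamma^1,\dots,\bm\Gamma^m):=\det(\bm C)^{-1/3}\big(\tilde{\bm S}-\tfrac13(\bm C:\tilde{\bm S})\bm C^{-1}\big)$. *)

theory Defs
  imports "HOL-Analysis.Analysis"
begin

text \<open>Tensors are 3x3 real matrices. On real^3^3 the library inner product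
  A \<bullet> B is the double contraction A : B, and norm A is the Frobenius norm |A|.\<close>

coinductive Cinf_on :: "'a::real_normed_vector set \<Rightarrow> ('a \<Rightarrow> 'b::real_normed_vector) \<Rightarrow> bool"
  for U :: "'a set" where
  "\<lbrakk>\<And>x. x \<in> U \<Longrightarrow> f differentiable (at x within U);
    \<And>v. Cinf_on U (\<lambda>x. frechet_derivative f (at x within U) v)\<rbrakk> \<Longrightarrow> Cinf_on U f"

definition sym_tensor :: "real^3^3 \<Rightarrow> bool" where
  "sym_tensor A \<longleftrightarrow> transpose A = A"

definition spd :: "real^3^3 \<Rightarrow> bool" where
  "spd A \<longleftrightarrow> sym_tensor A \<and> (\<forall>x::real^3. x \<noteq> 0 \<longrightarrow> 0 < x \<bullet> (A *v x))"

definition smooth_spd :: "(real^3^3 \<Rightarrow> real) \<Rightarrow> bool" where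
  "smooth_spd g \<longleftrightarrow> (\<exists>U. open U \<and> {A. spd A} \<subseteq> U \<and> Cinf_on U g)"

definition unimod :: "real^3^3 \<Rightarrow> real^3^3" where
  "unimod C = (det C powr (-1/3)) *\<^sub>R C"

definition basis_t :: "3 \<Rightarrow> 3 \<Rightarrow> real^3^3" where
  "basis_t i j = (\<chi> k l. if k = i \<and> l = j then 1 else 0)"

text \<open>Gradient dg/dC: the tensor D with g'(C) H = D : H.\<close>
definition grad :: "(real^3^3 \<Rightarrow> real) \<Rightarrow> real^3^3 \<Rightarrow> real^3^3" where
  "grad g C = (\<chi> i j. frechet_derivative g (at C) (basis_t i j))"

definition Sa :: "(nat \<Rightarrow> real^3^3 \<Rightarrow> real) \<Rightarrow> nat \<Rightarrow> real^3^3 \<Rightarrow> real^3^3" where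
  "Sa G \<alpha> Cb = 2 *\<^sub>R grad (G \<alpha>) Cb"

definition Upsilon :: "(nat \<Rightarrow> real) \<Rightarrow> (nat \<Rightarrow> real^3^3 \<Rightarrow> real) \<Rightarrow> (nat \<Rightarrow> real^3^3)
    \<Rightarrow> nat \<Rightarrow> real^3^3 \<Rightarrow> real^3^3 \<Rightarrow> real" where
  "Upsilon mu G S0 \<alpha> Cb Gam =
     1 / (4 * mu \<alpha>) * (norm (Sa G \<alpha> Cb - S0 \<alpha> - mu \<alpha> *\<^sub>R (Gam - mat 1)))\<^sup>2"

definition Giso :: "nat \<Rightarrow> (nat \<Rightarrow> real) \<Rightarrow> (nat \<Rightarrow> real^3^3 \<Rightarrow> real) \<Rightarrow> (nat \<Rightarrow> real^3^3)
    \<Rightarrow> (real^3^3 \<Rightarrow> real) \<Rightarrow> real^3^3 \<Rightarrow> (nat \<Rightarrow> real^3^3) \<Rightarrow> real" where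
  "Giso m mu G S0 Ginf Cb Gs = Ginf Cb + (\<Sum>\<alpha>=1..m. Upsilon mu G S0 \<alpha> Cb (Gs \<alpha>))"

definition Siso :: "nat \<Rightarrow> (nat \<Rightarrow> real) \<Rightarrow> (nat \<Rightarrow> real^3^3 \<Rightarrow> real) \<Rightarrow> (nat \<Rightarrow> real^3^3)
    \<Rightarrow> (real^3^3 \<Rightarrow> real) \<Rightarrow> real^3^3 \<Rightarrow> (nat \<Rightarrow> real^3^3) \<Rightarrow> real^3^3" where
  "Siso m mu G S0 Ginf C Gs =
     (let St = 2 *\<^sub>R grad (\<lambda>X. Giso m mu G S0 Ginf X Gs) (unimod C)
      in (det C powr (-1/3)) *\<^sub>R (St - ((1/3) * (C \<bullet> St)) *\<^sub>R matrix_inv C))"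

definition Senh1 :: "nat \<Rightarrow> (nat \<Rightarrow> real) \<Rightarrow> (nat \<Rightarrow> real^3^3 \<Rightarrow> real) \<Rightarrow> (nat \<Rightarrow> real^3^3)
    \<Rightarrow> (real^3^3 \<Rightarrow> real) \<Rightarrow> (real \<Rightarrow> real^3^3) \<Rightarrow> (nat \<Rightarrow> real \<Rightarrow> real^3^3)
    \<Rightarrow> real \<Rightarrow> real \<Rightarrow> real^3^3" where
  "Senh1 m mu G S0 Ginf C Gam tn dt =
     (let Cn = C tn; Cn1 = C (tn + dt);
          Gn1 = (\<lambda>\<alpha>. Gam \<alpha> (tn + dt));
          Gh = (\<lambda>\<alpha>. (1/2) *\<^sub>R (Gam \<alpha> tn + Gam \<alpha> (tn + dt)));
          Ch = (1/2) *\<^sub>R (Cn + Cn1);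
          Z = (1/2) *\<^sub>R (Cn1 - Cn)
      in if Z = 0 then 0
         else ((Giso m mu G S0 Ginf (unimod Cn1) Gn1 - Giso m mu G S0 Ginf (unimod Cn) Gn1
                 - Siso m mu G S0 Ginf Ch Gh \<bullet> Z) / (norm Z)\<^sup>2) *\<^sub>R Z)"

end

theory Submission
  imports Defs
begin


definition lip :: "'a::metric_space set \<Rightarrow> ('a \<Rightarrow> 'b::metric_space) \<Rightarrow> bool" where
  "lip S f \<longleftrightarrow> (\<exists>L. L-lipschitz_on S f)"

lemma lip_cong: "lip S f \<Longrightarrow> (\<And>x. x \<in> S \<Longrightarrow> f x = g x) \<Longrightarrow> lip S g"
  unfolding lip_def by (metis lipschitz_on_transform)

lemma lip_subset: "lip S f \<Longrightarrow> T \<subseteq> S \<Longrightarrow> lip T f"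
  unfolding lip_def by (meson lipschitz_on_subset)

lemma lip_compose: "lip T f \<Longrightarrow> lip S g \<Longrightarrow> g ` S \<subseteq> T \<Longrightarrow> lip S (\<lambda>x. f (g x))"
proof -
  assume a: "lip T f" "lip S g" "g ` S \<subseteq> T"
  then obtain L M where "L-lipschitz_on T f" "M-lipschitz_on S g" unfolding lip_def by blast
  then have "(L * M)-lipschitz_on S (\<lambda>x. f (g x))"
    using a(3) by (intro lipschitz_on_compose2) (auto intro: lipschitz_on_subset)
  then show ?thesis unfolding lip_def by blast
qed

lemma lip_const: "lip S (\<lambda>x. c)"
  unfolding lip_def using lipschitz_on_constant by blast

lemma lip_id: "lip S (\<lambda>x. x)"
  unfolding lip_def using lipschitz_on_id by blast

lemma lip_add: fixes f g :: "'a::metric_space \<Rightarrow> 'b::real_normed_vector"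
  shows "lip S f \<Longrightarrow> lip S g \<Longrightarrow> lip S (\<lambda>x. f x + g x)"
  unfolding lip_def using lipschitz_on_add by blast

lemma lip_diff: fixes f g :: "'a::metric_space \<Rightarrow> 'b::real_normed_vector"
  shows "lip S f \<Longrightarrow> lip S g \<Longrightarrow> lip S (\<lambda>x. f x - g x)"
  unfolding lip_def using lipschitz_on_diff by blast

lemma lip_scale: fixes f :: "'a::metric_space \<Rightarrow> 'b::real_normed_vector"
  shows "lip S f \<Longrightarrow> lip S (\<lambda>x. c *\<^sub>R f x)"
  unfolding lip_def using lipschitz_on_cmult by blast

lemma lip_sum: fixes f :: "'i \<Rightarrow> 'a::metric_space \<Rightarrow> 'b::real_normed_vector"
  assumes "finite A" "\<And>a. a \<in> A \<Longrightarrow> lip S (f a)"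
  shows "lip S (\<lambda>x. \<Sum>a\<in>A. f a x)"
  using assms
proof (induction A rule: finite_induct)
  case empty then show ?case by (simp add: lip_const)
next
  case (insert a A) then show ?case by (simp add: lip_add)
qed

lemma lip_linear: fixes f :: "'a::real_normed_vector \<Rightarrow> 'b::real_normed_vector"
  assumes "bounded_linear f" shows "lip S f"
proof -
  obtain B where "\<And>x. norm (f x) \<le> norm x * B" "B \<ge> 0"
    using bounded_linear.nonneg_bounded[OF assms] by blast
  then have "B-lipschitz_on S f"
    unfolding lipschitz_on_def dist_norm
    by (metis assms linear_diff bounded_linear.linear mult.commute)
  then show ?thesis unfolding lip_def by blast
qed

lemma lip_bounded: fixes f :: "'a::real_normed_vector \<Rightarrow> 'b::real_normed_vector"
  assumes "lip S f" "bounded S" shows "\<exists>B\<ge>0. \<forall>x\<in>S. norm (f x) \<le> B"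
proof (cases "S = {}")
  case True then show ?thesis by auto
next
  case False
  then obtain x0 where x0: "x0 \<in> S" by auto
  obtain L where L: "L-lipschitz_on S f" using assms unfolding lip_def by blast
  obtain R where R: "\<forall>x\<in>S. norm x \<le> R" using assms(2) bounded_iff by blast
  have "norm (f x) \<le> norm (f x0) + L * (R + R)" if "x \<in> S" for x
  proof -
    have "norm (f x - f x0) \<le> L * norm (x - x0)"
      using lipschitz_onD[OF L that x0] by (simp add: dist_norm)
    also have "\<dots> \<le> L * (R + R)"
      using lipschitz_on_nonneg[OF L] R[rule_format, OF that] R[rule_format, OF x0] norm_triangle_ineq4[of x x0]
      by (intro mult_left_mono) auto
    finally show ?thesis by (metis add.commute norm_triangle_sub order_trans add_le_cancel_left)
  qed
  then show ?thesis by (meson norm_ge_zero order_trans x0)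
qed

lemma lip_bilinear:
  fixes f :: "'a::real_normed_vector \<Rightarrow> 'b::real_normed_vector" and g :: "'a \<Rightarrow> 'c::real_normed_vector"
  assumes bb: "bounded_bilinear pr" and S: "bounded S" and f: "lip S f" and g: "lip S g"
  shows "lip S (\<lambda>x. pr (f x) (g x) :: 'd::real_normed_vector)"
proof -
  obtain Bf where Bf: "\<forall>x\<in>S. norm (f x) \<le> Bf" "Bf \<ge> 0" using lip_bounded[OF f S] by blast
  obtain Bg where Bg: "\<forall>x\<in>S. norm (g x) \<le> Bg" "Bg \<ge> 0" using lip_bounded[OF g S] by blast
  obtain Lf where Lf: "Lf-lipschitz_on S f" using f unfolding lip_def by blast
  obtain Lg where Lg: "Lg-lipschitz_on S g" using g unfolding lip_def by blast
  obtain K where K: "\<And>a b. norm (pr a b) \<le> norm a * norm b * K" "K \<ge> 0"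
    using bounded_bilinear.nonneg_bounded[OF bb] by blast
  have "(K * (Lf * Bg + Bf * Lg))-lipschitz_on S (\<lambda>x. pr (f x) (g x))"
  proof (rule lipschitz_onI)
    fix x y assume xy: "x \<in> S" "y \<in> S"
    have e: "pr (f x) (g x) - pr (f y) (g y) = pr (f x - f y) (g x) + pr (f y) (g x - g y)"
      by (simp add: bounded_bilinear.diff_left[OF bb] bounded_bilinear.diff_right[OF bb])
    have n1: "norm (f x - f y) \<le> Lf * norm (x - y)" "norm (g x - g y) \<le> Lg * norm (x - y)"
      using lipschitz_onD[OF Lf xy] lipschitz_onD[OF Lg xy] by (auto simp: dist_norm)
    have "norm (pr (f x - f y) (g x)) \<le> norm (f x - f y) * norm (g x) * K" by (rule K)
    also have "\<dots> \<le> (Lf * norm (x - y)) * Bg * K"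
      using n1 Bg xy K(2) lipschitz_on_nonneg[OF Lf] by (intro mult_right_mono mult_mono) auto
    finally have a1: "norm (pr (f x - f y) (g x)) \<le> (Lf * norm (x - y)) * Bg * K" .
    have "norm (pr (f y) (g x - g y)) \<le> norm (f y) * norm (g x - g y) * K" by (rule K)
    also have "\<dots> \<le> Bf * (Lg * norm (x - y)) * K"
      using n1 Bf xy K(2) by (intro mult_right_mono mult_mono) auto
    finally have a2: "norm (pr (f y) (g x - g y)) \<le> Bf * (Lg * norm (x - y)) * K" .
    show "dist (pr (f x) (g x)) (pr (f y) (g y)) \<le> K * (Lf * Bg + Bf * Lg) * dist x y"
      unfolding dist_norm e using norm_triangle_le[OF add_mono[OF a1 a2]]
      by (simp add: algebra_simps)
  next
    have "Lf \<ge> 0" "Lg \<ge> 0" using Lf Lg lipschitz_on_nonneg by auto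
    then show "0 \<le> K * (Lf * Bg + Bf * Lg)" using K(2) Bf Bg by simp
  qed
  then show ?thesis unfolding lip_def by blast
qed



lemma lip_cart: fixes f :: "'a::metric_space \<Rightarrow> 'b::real_normed_vector^'n"
  assumes "\<And>i. lip S (\<lambda>x. f x $ i)" shows "lip S f"
proof -
  from assms have "\<forall>i. \<exists>L. L-lipschitz_on S (\<lambda>x. f x $ i)" unfolding lip_def by blast
  then obtain L where L: "\<And>i. (L i)-lipschitz_on S (\<lambda>x. f x $ i)" by metis
  have "(\<Sum>i\<in>UNIV. L i)-lipschitz_on S f"
  proof (rule lipschitz_onI)
    fix x y assume xy: "x \<in> S" "y \<in> S"
    have "dist (f x) (f y) = norm (f x - f y)" by (simp add: dist_norm)
    also have "\<dots> \<le> (\<Sum>i\<in>UNIV. norm ((f x - f y) $ i))"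
      unfolding norm_vec_def by (rule L2_set_le_sum) auto
    also have "\<dots> = (\<Sum>i\<in>UNIV. dist (f x $ i) (f y $ i))" by (simp add: dist_norm)
    also have "\<dots> \<le> (\<Sum>i\<in>UNIV. L i * dist x y)"
      by (intro sum_mono lipschitz_onD[OF L xy])
    finally show "dist (f x) (f y) \<le> (\<Sum>i\<in>UNIV. L i) * dist x y" by (simp add: sum_distrib_right)
  next
    show "0 \<le> (\<Sum>i\<in>UNIV. L i)" using L lipschitz_on_nonneg by (meson sum_nonneg)
  qed
  then show ?thesis unfolding lip_def by blast
qed



lemma lip_deriv:
  fixes f :: "'a::euclidean_space \<Rightarrow> 'b::real_normed_vector"
  assumes K: "convex K" "compact K"
    and d: "\<And>x. x \<in> K \<Longrightarrow> (f has_derivative f' x) (at x within K)"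
    and c: "\<And>b. b \<in> Basis \<Longrightarrow> continuous_on K (\<lambda>x. f' x b)"
  shows "lip K f"
proof -
  have "\<forall>b\<in>Basis. \<exists>B. B \<ge> 0 \<and> (\<forall>x\<in>K. norm (f' x b) \<le> B)"
  proof
    fix b :: 'a assume b: "b \<in> Basis"
    have "compact ((\<lambda>x. f' x b) ` K)" by (rule compact_continuous_image[OF c[OF b] K(2)])
    then have "bounded ((\<lambda>x. f' x b) ` K)" by (rule compact_imp_bounded)
    then obtain B where "\<forall>y\<in>(\<lambda>x. f' x b) ` K. norm y \<le> B" unfolding bounded_iff by blast
    then have "\<forall>x\<in>K. norm (f' x b) \<le> B" by simp
    then show "\<exists>B. B \<ge> 0 \<and> (\<forall>x\<in>K. norm (f' x b) \<le> B)" by (intro exI[of _ "max B 0"]) auto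
  qed
  from bchoice[OF this] obtain B where B: "\<forall>b\<in>Basis. B b \<ge> 0 \<and> (\<forall>x\<in>K. norm (f' x b) \<le> B b)"
    by (rule exE)
  define BB where "BB = (\<Sum>b\<in>Basis. B b)"
  have BB0: "BB \<ge> 0" unfolding BB_def by (rule sum_nonneg) (use B in blast)
  have on: "onorm (f' x) \<le> BB" if x: "x \<in> K" for x
  proof (rule onorm_le)
    fix h :: 'a
    have lin: "linear (f' x)" using d[OF x] has_derivative_linear by blast
    have "f' x h = f' x (\<Sum>b\<in>Basis. (h \<bullet> b) *\<^sub>R b)" by (simp only: euclidean_representation)
    also have "\<dots> = (\<Sum>b\<in>Basis. (h \<bullet> b) *\<^sub>R f' x b)"
      by (simp only: linear_sum[OF lin] linear_scale[OF lin])
    finally have "norm (f' x h) \<le> (\<Sum>b\<in>Basis. norm ((h \<bullet> b) *\<^sub>R f' x b))"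
      by (metis norm_sum)
    also have "\<dots> \<le> (\<Sum>b\<in>Basis. norm h * B b)"
    proof (rule sum_mono)
      fix b :: 'a assume b: "b \<in> Basis"
      have "norm ((h \<bullet> b) *\<^sub>R f' x b) = \<bar>h \<bullet> b\<bar> * norm (f' x b)" by (rule norm_scaleR)
      also have "\<dots> \<le> norm h * B b"
        using B b x Basis_le_norm[OF b, of h] by (intro mult_mono) auto
      finally show "norm ((h \<bullet> b) *\<^sub>R f' x b) \<le> norm h * B b" .
    qed
    finally show "norm (f' x h) \<le> BB * norm h" by (simp add: BB_def sum_distrib_left mult.commute)
  qed
  have "BB-lipschitz_on K f"
    unfolding lipschitz_on_def dist_norm using differentiable_bound[OF K(1) d on] BB0 by blast
  then show ?thesis unfolding lip_def by blast
qed



lemma hd_transfer: assumes "x \<in> U" "\<And>y. y \<in> U \<Longrightarrow> f y = g y"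
   "(f has_derivative D) (at x within U)" shows "(g has_derivative D) (at x within U)"
  using has_derivative_transform_within[OF assms(3) zero_less_one assms(1)] assms(2) by blast

lemma fd_transfer: assumes "x \<in> U" "\<And>y. y \<in> U \<Longrightarrow> f y = g y"
  shows "frechet_derivative f (at x within U) = frechet_derivative g (at x within U)"
proof -
  have "(f has_derivative D) (at x within U) \<longleftrightarrow> (g has_derivative D) (at x within U)" for D
    using hd_transfer[of x U f g D] hd_transfer[of x U g f D] assms by metis
  then show ?thesis unfolding frechet_derivative_def by simp
qed

lemma Cinf_cong: assumes "Cinf_on U f" "\<And>x. x \<in> U \<Longrightarrow> f x = g x" shows "Cinf_on U g"
proof -
  have "\<exists>f. Cinf_on U f \<and> (\<forall>x\<in>U. f x = g x)" using assms by blast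
  then show ?thesis
  proof (coinduction arbitrary: g rule: Cinf_on.coinduct)
    case (Cinf_on g)
    then obtain f where f: "Cinf_on U f" "\<forall>x\<in>U. f x = g x" by blast
    from f(1) have d: "\<And>x. x \<in> U \<Longrightarrow> f differentiable (at x within U)"
      and c: "\<And>v. Cinf_on U (\<lambda>x. frechet_derivative f (at x within U) v)"
      by (blast elim: Cinf_on.cases)+
    have "g differentiable (at x within U)" if x: "x \<in> U" for x
      using hd_transfer[OF x _ frechet_derivative_works[THEN iffD1, OF d[OF x]], of g] f(2)
      unfolding differentiable_def by blast
    moreover have "\<exists>f. Cinf_on U f \<and> (\<forall>x\<in>U. f x = frechet_derivative g (at x within U) v)" for v
      using c[of v] fd_transfer[of _ U f g] f(2) by auto
    ultimately show ?case by blast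
  qed
qed

lemma Cinf_diff: "Cinf_on U f \<Longrightarrow> x \<in> U \<Longrightarrow> (f has_derivative frechet_derivative f (at x within U)) (at x within U)"
  by (erule Cinf_on.cases) (simp add: frechet_derivative_works[symmetric])

lemma Cinf_D: "Cinf_on U f \<Longrightarrow> Cinf_on U (\<lambda>x. frechet_derivative f (at x within U) v)"
  by (erule Cinf_on.cases) simp

lemma Cinf_cont: "Cinf_on U f \<Longrightarrow> continuous_on U f"
  by (metis Cinf_diff continuous_on_eq_continuous_within has_derivative_continuous)

lemma Cinf_open_diff: "open U \<Longrightarrow> Cinf_on U f \<Longrightarrow> x \<in> U \<Longrightarrow> (f has_derivative frechet_derivative f (at x)) (at x)"
  by (metis Cinf_diff at_within_open)

lemma Cinf_open_D: assumes "open U" "Cinf_on U f" shows "Cinf_on U (\<lambda>x. frechet_derivative f (at x) v)"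
proof (rule Cinf_cong[OF Cinf_D[OF assms(2)]])
  fix x assume x: "x \<in> U"
  have "at x within U = at x" by (rule at_within_open[OF x assms(1)])
  then show "frechet_derivative f (at x within U) v = frechet_derivative f (at x) v" by (simp only:)
qed

lemma lip_Cinf_within:
  fixes f :: "'a::euclidean_space \<Rightarrow> 'b::real_normed_vector"
  assumes "Cinf_on K f" "convex K" "compact K" shows "lip K f"
  by (rule lip_deriv[OF assms(2,3) Cinf_diff[OF assms(1)]], assumption, rule Cinf_cont[OF Cinf_D[OF assms(1)]])

lemma lip_Cinf:
  fixes f :: "'a::euclidean_space \<Rightarrow> 'b::real_normed_vector"
  assumes "open U" "Cinf_on U f" "K \<subseteq> U" "convex K" "compact K" shows "lip K f"
proof (rule lip_deriv[OF assms(4,5)])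
  fix x assume "x \<in> K"
  then show "(f has_derivative frechet_derivative f (at x)) (at x within K)"
    using Cinf_open_diff[OF assms(1,2)] assms(3) has_derivative_at_withinI by blast
next
  fix b :: 'a
  show "continuous_on K (\<lambda>x. frechet_derivative f (at x) b)"
    using Cinf_cont[OF Cinf_open_D[OF assms(1,2)]] assms(3) continuous_on_subset by blast
qed



definition cof :: "real^3^3 \<Rightarrow> real^3^3" where
  "cof A = vector [
     vector [A$2$2 * A$3$3 - A$2$3 * A$3$2, A$2$3 * A$3$1 - A$2$1 * A$3$3, A$2$1 * A$3$2 - A$2$2 * A$3$1],
     vector [A$1$3 * A$3$2 - A$1$2 * A$3$3, A$1$1 * A$3$3 - A$1$3 * A$3$1, A$1$2 * A$3$1 - A$1$1 * A$3$2],
     vector [A$1$2 * A$2$3 - A$1$3 * A$2$2, A$1$3 * A$2$1 - A$1$1 * A$2$3, A$1$1 * A$2$2 - A$1$2 * A$2$1]]"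

lemma cof_mult1: "A ** transpose (cof A) = det A *\<^sub>R mat 1"
  by (simp add: vec_eq_iff forall_3 matrix_matrix_mult_def sum_3 det_3 mat_def transpose_def cof_def algebra_simps)

lemma cof_mult2: "transpose (cof A) ** A = det A *\<^sub>R mat 1"
  by (simp add: vec_eq_iff forall_3 matrix_matrix_mult_def sum_3 det_3 mat_def transpose_def cof_def algebra_simps)

lemma matrix_inv_eq: fixes A B :: "real^'n^'n"
  assumes "A ** B = mat 1" "B ** A = mat 1" shows "matrix_inv A = B"
proof -
  have "\<exists>A'. A ** A' = mat 1 \<and> A' ** A = mat 1" using assms by blast
  then have i: "A ** matrix_inv A = mat 1" "matrix_inv A ** A = mat 1"
    unfolding matrix_inv_def by (metis (mono_tags, lifting) someI_ex)+
  have "matrix_inv A = matrix_inv A ** (A ** B)" by (simp add: assms)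
  also have "\<dots> = B" by (simp add: matrix_mul_assoc i)
  finally show ?thesis .
qed

lemma matrix_inv_cof: assumes "det A \<noteq> 0" shows "matrix_inv A = (1 / det A) *\<^sub>R transpose (cof A)"
proof (rule matrix_inv_eq)
  show "A ** ((1 / det A) *\<^sub>R transpose (cof A)) = mat 1"
    using assms by (simp add: matrix_scalar_ac scalar_matrix_assoc[symmetric] cof_mult1)
  show "((1 / det A) *\<^sub>R transpose (cof A)) ** A = mat 1"
    using assms by (simp add: scalar_matrix_assoc[symmetric] cof_mult2)
qed

lemma cof_sym: "sym_tensor A \<Longrightarrow> transpose (cof A) = cof A"
proof -
  assume "sym_tensor A"
  then have t: "transpose A = A" unfolding sym_tensor_def .
  have e: "A$i$j = A$j$i" for i j
  proof -
    have "(transpose A)$j$i = A$i$j" by (simp add: transpose_def)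
    then show ?thesis using t by simp
  qed
  show ?thesis
    by (simp add: vec_eq_iff forall_3 transpose_def cof_def e[of 2 1] e[of 3 1] e[of 3 2] algebra_simps)
qed

lemma det_fun: "det = (\<lambda>A::real^3^3. A$1$1 * A$2$2 * A$3$3 + A$1$2 * A$2$3 * A$3$1 + A$1$3 * A$2$1 * A$3$2 -
    A$1$1 * A$2$3 * A$3$2 - A$1$2 * A$2$1 * A$3$3 - A$1$3 * A$2$2 * A$3$1)"
  by (rule ext) (rule det_3)

lemma hd_nth: "((\<lambda>A::real^3^3. A $ i $ j) has_derivative (\<lambda>H. H $ i $ j)) F"
proof -
  have "bounded_linear (\<lambda>A::real^3^3. A $ i $ j)"
    by (rule bounded_linear_compose[OF bounded_linear_vec_nth bounded_linear_vec_nth])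
  then show ?thesis by (rule bounded_linear_imp_has_derivative)
qed

lemma det_has_derivative: "(det has_derivative (\<lambda>H. cof A \<bullet> H)) (at A)"
proof -
  have "(det has_derivative (\<lambda>H.
      H$1$1 * A$2$2 * A$3$3 + A$1$1 * H$2$2 * A$3$3 + A$1$1 * A$2$2 * H$3$3
    + (H$1$2 * A$2$3 * A$3$1 + A$1$2 * H$2$3 * A$3$1 + A$1$2 * A$2$3 * H$3$1)
    + (H$1$3 * A$2$1 * A$3$2 + A$1$3 * H$2$1 * A$3$2 + A$1$3 * A$2$1 * H$3$2)
    - (H$1$1 * A$2$3 * A$3$2 + A$1$1 * H$2$3 * A$3$2 + A$1$1 * A$2$3 * H$3$2)
    - (H$1$2 * A$2$1 * A$3$3 + A$1$2 * H$2$1 * A$3$3 + A$1$2 * A$2$1 * H$3$3)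
    - (H$1$3 * A$2$2 * A$3$1 + A$1$3 * H$2$2 * A$3$1 + A$1$3 * A$2$2 * H$3$1))) (at A)"
    unfolding det_fun
    by (rule has_derivative_eq_rhs, (rule hd_nth derivative_eq_intros refl)+) (simp add: algebra_simps)
  then show ?thesis
    by (rule has_derivative_eq_rhs) (simp add: fun_eq_iff inner_vec_def sum_3 cof_def algebra_simps)
qed

lemma continuous_det: "continuous_on S (det :: real^3^3 \<Rightarrow> real)"
  using has_derivative_continuous[OF det_has_derivative] continuous_at_imp_continuous_on by blast



lemma transpose_add': "transpose (A + B) = transpose A + transpose (B::real^3^3)"
  by (simp add: transpose_def vec_eq_iff)

lemma spd_mat1: "spd (mat 1)"
  unfolding spd_def sym_tensor_def by (simp add: inner_gt_zero_iff)

lemma spd_comb: assumes "spd A" "spd B" "u \<ge> 0" "v \<ge> 0" "u + v = 1"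
  shows "spd (u *\<^sub>R A + v *\<^sub>R B)"
  unfolding spd_def sym_tensor_def
proof (intro conjI allI impI)
  show "transpose (u *\<^sub>R A + v *\<^sub>R B) = u *\<^sub>R A + v *\<^sub>R B"
    using assms(1,2) by (simp add: transpose_add' transpose_scalar spd_def sym_tensor_def)
  fix x :: "real^3" assume x: "x \<noteq> 0"
  have a: "0 < x \<bullet> (A *v x)" "0 < x \<bullet> (B *v x)" using assms(1,2) x unfolding spd_def by auto
  have "x \<bullet> ((u *\<^sub>R A + v *\<^sub>R B) *v x) = u * (x \<bullet> (A *v x)) + v * (x \<bullet> (B *v x))"
    by (simp add: matrix_vector_mult_add_rdistrib scaleR_matrix_vector_assoc[symmetric] inner_add_right)
  also have "\<dots> > 0"
  proof (cases "u = 0")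
    case True then show ?thesis using assms a by simp
  next
    case False then have "u > 0" using assms by simp
    then show ?thesis using a assms by (simp add: add_pos_nonneg)
  qed
  finally show "0 < x \<bullet> ((u *\<^sub>R A + v *\<^sub>R B) *v x)" .
qed

lemma spd_convex: "convex {A. spd A}"
  unfolding convex_def using spd_comb by blast

lemma spd_scale: "spd A \<Longrightarrow> c > 0 \<Longrightarrow> spd (c *\<^sub>R A)"
  unfolding spd_def sym_tensor_def
  by (simp add: transpose_scalar scaleR_matrix_vector_assoc[symmetric])

lemma spd_det_nz: assumes "spd A" shows "det A \<noteq> 0"
proof
  assume "det A = 0"
  then have "\<not> inj ((*v) A)"
    using det_nz_iff_inj[of "(*v) A"] by simp
  then obtain x y where "x \<noteq> y" "A *v x = A *v y" unfolding inj_def by blast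
  then have "x - y \<noteq> 0" "A *v (x - y) = 0" by (auto simp: matrix_vector_mult_diff_distrib)
  then show False using assms unfolding spd_def by fastforce
qed

lemma spd_det_pos: assumes "spd A" shows "det A > 0"
proof (rule ccontr)
  assume "\<not> det A > 0"
  then have n: "det A \<le> 0" by simp
  let ?f = "\<lambda>s::real. det ((1 - s) *\<^sub>R mat 1 + s *\<^sub>R A)"
  have c: "continuous_on {0..1} ?f"
    by (intro continuous_on_compose2[OF continuous_det[of UNIV]] continuous_intros) auto
  have "?f 1 \<le> 0" "0 \<le> ?f 0" using n by auto
  from IVT2'[of ?f 1 0 0, OF this zero_le_one c] obtain s where s: "0 \<le> s" "s \<le> 1" "?f s = 0" by blast
  have "spd ((1 - s) *\<^sub>R mat 1 + s *\<^sub>R A)" using s by (intro spd_comb spd_mat1 assms) auto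
  then show False using spd_det_nz s(3) by blast
qed

lemma unimod_spd: "spd C \<Longrightarrow> spd (unimod C)"
proof -
  assume a: "spd C"
  have "det C powr (-1/3) > 0" using spd_det_pos[OF a] by simp
  then show ?thesis unfolding unimod_def by (rule spd_scale[OF a])
qed

lemma basis_expand: "H = (\<Sum>i\<in>UNIV. \<Sum>j\<in>UNIV. H$i$j *\<^sub>R basis_t i j)"
  by (simp add: vec_eq_iff forall_3 sum_3 basis_t_def)

lemma grad_repr: assumes "linear L" shows "L H = (\<chi> i j. L (basis_t i j)) \<bullet> (H::real^3^3)"
proof -
  have "L H = L (\<Sum>i\<in>UNIV. \<Sum>j\<in>UNIV. H$i$j *\<^sub>R basis_t i j)" by (subst basis_expand) (rule refl)
  also have "\<dots> = (\<Sum>i\<in>UNIV. \<Sum>j\<in>UNIV. H$i$j * L (basis_t i j))"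
    by (simp add: linear_sum[OF assms] linear_scale[OF assms])
  also have "\<dots> = (\<chi> i j. L (basis_t i j)) \<bullet> H"
    by (simp add: inner_vec_def mult.commute)
  finally show ?thesis .
qed



definition sisoG :: "(real^3^3 \<Rightarrow> real) \<Rightarrow> real^3^3 \<Rightarrow> real^3^3" where
  "sisoG g C = (let St = 2 *\<^sub>R grad g (unimod C)
      in (det C powr (-1/3)) *\<^sub>R (St - ((1/3) * (C \<bullet> St)) *\<^sub>R matrix_inv C))"

lemma Siso_eq: "Siso m mu G S0 Ginf C Gs = sisoG (\<lambda>X. Giso m mu G S0 Ginf X Gs) C"
  unfolding Siso_def sisoG_def by simp

lemma inv_inner: assumes "spd C" shows "matrix_inv C \<bullet> H = (cof C \<bullet> H) / det C"
proof -
  have "det C \<noteq> 0" using spd_det_nz[OF assms] .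
  then have "matrix_inv C = (1 / det C) *\<^sub>R cof C"
    using matrix_inv_cof cof_sym assms unfolding spd_def by metis
  then show ?thesis by simp
qed

lemma unimod_deriv: assumes "spd C"
  shows "(unimod has_derivative (\<lambda>H. det C powr (-1/3) *\<^sub>R H
           - ((1/3) * det C powr (-1/3) * (matrix_inv C \<bullet> H)) *\<^sub>R C)) (at C)"
proof -
  have dp: "det C > 0" using spd_det_pos[OF assms] .
  have p: "((\<lambda>z. z powr (-1/3)) has_derivative (*) ((-1/3) * det C powr (-1/3 - 1))) (at (det C))"
    by (rule has_real_derivative_powr[OF dp, of "-1/3", unfolded has_field_derivative_def])
  have pd: "((\<lambda>A. det A powr (-1/3)) has_derivative
      (\<lambda>H. ((-1/3) * det C powr (-1/3 - 1)) * (cof C \<bullet> H))) (at C)"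
    using has_derivative_compose[OF det_has_derivative p] by (simp add: o_def)
  have u: "(unimod has_derivative (\<lambda>H. det C powr (-1/3) *\<^sub>R H
        + (((-1/3) * det C powr (-1/3 - 1)) * (cof C \<bullet> H)) *\<^sub>R C)) (at C)"
    unfolding unimod_def[abs_def]
    using has_derivative_scaleR[OF pd has_derivative_ident] by simp
  have e: "((-1/3) * det C powr (-1/3 - 1)) * (cof C \<bullet> H) = - ((1/3) * det C powr (-1/3) * (matrix_inv C \<bullet> H))" for H
  proof -
    have "det C powr (-1/3 - 1) = det C powr (-1/3) / det C powr 1"
      by (rule powr_diff)
    then have "det C powr (-1/3 - 1) = det C powr (-1/3) / det C"
      using dp by simp
    then show ?thesis using dp by (simp add: inv_inner[OF assms] field_simps)
  qed
  show ?thesis using u unfolding e by simp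
qed

lemma F_deriv: assumes "spd C" "g differentiable (at (unimod C))"
  shows "((\<lambda>C. g (unimod C)) has_derivative (\<lambda>H. (1/2) * (sisoG g C \<bullet> H))) (at C)"
proof -
  let ?X = "unimod C"
  let ?g' = "frechet_derivative g (at ?X)"
  let ?d = "det C powr (-1/3)"
  let ?M = "matrix_inv C"
  have g': "(g has_derivative ?g') (at ?X)" using assms(2) frechet_derivative_works by blast
  have lin: "linear ?g'" using g' has_derivative_linear by blast
  have r: "?g' K = grad g ?X \<bullet> K" for K
    unfolding grad_def using grad_repr[OF lin] .
  have c: "((\<lambda>C. g (unimod C)) has_derivative (\<lambda>H. ?g' (?d *\<^sub>R H - ((1/3) * ?d * (?M \<bullet> H)) *\<^sub>R C))) (at C)"
    using has_derivative_compose[OF unimod_deriv[OF assms(1)] g'] by (simp add: o_def)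
  have eq: "?g' (?d *\<^sub>R H - ((1/3) * ?d * (?M \<bullet> H)) *\<^sub>R C) = (1/2) * (sisoG g C \<bullet> H)" for H
    unfolding r sisoG_def Let_def
    by (simp add: inner_diff_right inner_diff_left inner_commute[of C] algebra_simps)
  show ?thesis by (rule has_derivative_eq_rhs[OF c]) (rule ext, rule eq)
qed



definition g2 :: "(real^3^3 \<Rightarrow> real) \<Rightarrow> 3 \<Rightarrow> 3 \<Rightarrow> real^3^3 \<Rightarrow> real" where
  "g2 f i j Y = frechet_derivative f (at Y) (basis_t i j)"

definition DSa :: "(real^3^3 \<Rightarrow> real) \<Rightarrow> real^3^3 \<Rightarrow> real^3^3 \<Rightarrow> real^3^3" where
  "DSa f X H = 2 *\<^sub>R (\<chi> i j. frechet_derivative (g2 f i j) (at X) H)"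

definition Wf :: "(nat \<Rightarrow> real) \<Rightarrow> (nat \<Rightarrow> real^3^3 \<Rightarrow> real) \<Rightarrow> (nat \<Rightarrow> real^3^3) \<Rightarrow> nat
    \<Rightarrow> real^3^3 \<Rightarrow> real^3^3 \<Rightarrow> real^3^3" where
  "Wf mu G S0 \<alpha> X Gm = Sa G \<alpha> X - S0 \<alpha> - mu \<alpha> *\<^sub>R (Gm - mat 1)"

lemma chi_expand: "(\<chi> i j. a i j) = (\<Sum>i\<in>UNIV. \<Sum>j\<in>UNIV. a i j *\<^sub>R basis_t i j :: real^3^3)"
  by (subst basis_expand) simp

lemma vec_deriv: assumes "\<And>i j. ((\<lambda>Y. f i j Y) has_derivative f' i j) F"
  shows "((\<lambda>Y. (\<chi> i j. f i j Y) :: real^3^3) has_derivative (\<lambda>H. \<chi> i j. f' i j H)) F"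
  unfolding chi_expand
  by (intro has_derivative_sum has_derivative_scaleR_left assms)

lemma Sa_grad: "Sa G \<alpha> Y = 2 *\<^sub>R (\<chi> i j. g2 (G \<alpha>) i j Y)"
  unfolding Sa_def grad_def g2_def by simp

lemma Cinf_g2: "open U \<Longrightarrow> Cinf_on U f \<Longrightarrow> Cinf_on U (g2 f i j)"
  unfolding g2_def[abs_def] by (rule Cinf_open_D)

lemma Sa_deriv: assumes "open U" "Cinf_on U (G \<alpha>)" "X \<in> U"
  shows "(Sa G \<alpha> has_derivative DSa (G \<alpha>) X) (at X)"
proof -
  have "(g2 (G \<alpha>) i j has_derivative frechet_derivative (g2 (G \<alpha>) i j) (at X)) (at X)" for i j
    by (rule Cinf_open_diff[OF assms(1) Cinf_g2[OF assms(1,2)] assms(3)])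
  then have "((\<lambda>Y. \<chi> i j. g2 (G \<alpha>) i j Y) has_derivative (\<lambda>H. \<chi> i j. frechet_derivative (g2 (G \<alpha>) i j) (at X) H)) (at X)"
    by (rule vec_deriv)
  then have "((\<lambda>Y. 2 *\<^sub>R (\<chi> i j. g2 (G \<alpha>) i j Y)) has_derivative
      (\<lambda>H. 2 *\<^sub>R (\<chi> i j. frechet_derivative (g2 (G \<alpha>) i j) (at X) H))) (at X)"
    by (rule has_derivative_scaleR_right)
  then show ?thesis unfolding DSa_def[abs_def] Sa_grad[abs_def] .
qed

lemma Ups_deriv: assumes "open U" "Cinf_on U (G \<alpha>)" "X \<in> U"
  shows "((\<lambda>Y. Upsilon mu G S0 \<alpha> Y Gm) has_derivative
     (\<lambda>H. 1 / (4 * mu \<alpha>) * (2 * (Wf mu G S0 \<alpha> X Gm \<bullet> DSa (G \<alpha>) X H)))) (at X)"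
proof -
  have w: "((\<lambda>Y. Wf mu G S0 \<alpha> Y Gm) has_derivative DSa (G \<alpha>) X) (at X)"
    unfolding Wf_def using Sa_deriv[of U G \<alpha> X, OF assms] by (auto intro!: derivative_eq_intros)
  have "((\<lambda>Y. Wf mu G S0 \<alpha> Y Gm \<bullet> Wf mu G S0 \<alpha> Y Gm) has_derivative
     (\<lambda>H. Wf mu G S0 \<alpha> X Gm \<bullet> DSa (G \<alpha>) X H + DSa (G \<alpha>) X H \<bullet> Wf mu G S0 \<alpha> X Gm)) (at X)"
    by (rule has_derivative_inner[OF w w])
  then have "((\<lambda>Y. 1 / (4 * mu \<alpha>) * (Wf mu G S0 \<alpha> Y Gm \<bullet> Wf mu G S0 \<alpha> Y Gm)) has_derivative
     (\<lambda>H. 1 / (4 * mu \<alpha>) * (Wf mu G S0 \<alpha> X Gm \<bullet> DSa (G \<alpha>) X H + DSa (G \<alpha>) X H \<bullet> Wf mu G S0 \<alpha> X Gm))) (at X)"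
    by (rule has_derivative_mult_right)
  then show ?thesis
    unfolding Upsilon_def Wf_def[symmetric] power2_norm_eq_inner
    by (simp add: inner_commute[of "DSa (G \<alpha>) X _"])
qed

lemma Giso_deriv:
  assumes "\<And>\<alpha>. \<alpha> \<in> {1..m} \<Longrightarrow> open (U \<alpha>) \<and> Cinf_on (U \<alpha>) (G \<alpha>) \<and> X \<in> U \<alpha>"
    and "open Uinf" "Cinf_on Uinf Ginf" "X \<in> Uinf"
  shows "((\<lambda>Y. Giso m mu G S0 Ginf Y Gs) has_derivative
    (\<lambda>H. frechet_derivative Ginf (at X) H +
       (\<Sum>\<alpha>=1..m. 1 / (4 * mu \<alpha>) * (2 * (Wf mu G S0 \<alpha> X (Gs \<alpha>) \<bullet> DSa (G \<alpha>) X H))))) (at X)"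
proof -
  have "((\<lambda>Y. Upsilon mu G S0 \<alpha> Y (Gs \<alpha>)) has_derivative
     (\<lambda>H. 1 / (4 * mu \<alpha>) * (2 * (Wf mu G S0 \<alpha> X (Gs \<alpha>) \<bullet> DSa (G \<alpha>) X H)))) (at X)"
    if "\<alpha> \<in> {1..m}" for \<alpha>
    using assms(1)[OF that] Ups_deriv[of "U \<alpha>" G \<alpha> X] by blast
  then show ?thesis
    unfolding Giso_def
    by (intro has_derivative_add has_derivative_sum Cinf_open_diff[OF assms(2,3,4)])
qed

lemma grad_Giso:
  assumes "\<And>\<alpha>. \<alpha> \<in> {1..m} \<Longrightarrow> open (U \<alpha>) \<and> Cinf_on (U \<alpha>) (G \<alpha>) \<and> X \<in> U \<alpha>"
    and "open Uinf" "Cinf_on Uinf Ginf" "X \<in> Uinf"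
  shows "grad (\<lambda>Y. Giso m mu G S0 Ginf Y Gs) X = (\<chi> k l. g2 Ginf k l X +
       (\<Sum>\<alpha>=1..m. 1 / (4 * mu \<alpha>) * (2 * (Wf mu G S0 \<alpha> X (Gs \<alpha>) \<bullet> DSa (G \<alpha>) X (basis_t k l)))))"
proof -
  have d: "frechet_derivative (\<lambda>Y. Giso m mu G S0 Ginf Y Gs) (at X) = (\<lambda>H. frechet_derivative Ginf (at X) H +
       (\<Sum>\<alpha>=1..m. 1 / (4 * mu \<alpha>) * (2 * (Wf mu G S0 \<alpha> X (Gs \<alpha>) \<bullet> DSa (G \<alpha>) X H))))"
    by (rule frechet_derivative_at[OF Giso_deriv[OF assms], symmetric])
  show ?thesis unfolding grad_def g2_def d ..
qed



lemma lip_entry: "lip S f \<Longrightarrow> lip S (\<lambda>x. (f x :: real^3^3) $ i $ j)"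
  by (rule lip_compose[OF lip_linear[OF bounded_linear_compose[OF bounded_linear_vec_nth bounded_linear_vec_nth]]]) auto

lemma lip_mult: fixes f g :: "'a::real_normed_vector \<Rightarrow> real"
  shows "bounded S \<Longrightarrow> lip S f \<Longrightarrow> lip S g \<Longrightarrow> lip S (\<lambda>x. f x * g x)"
  by (rule lip_bilinear[OF bounded_bilinear_mult])

lemma lip_inner: fixes f g :: "'a::real_normed_vector \<Rightarrow> 'b::real_inner"
  shows "bounded S \<Longrightarrow> lip S f \<Longrightarrow> lip S g \<Longrightarrow> lip S (\<lambda>x. f x \<bullet> g x)"
  by (rule lip_bilinear[OF bounded_bilinear_inner])

lemma lip_scaleR: fixes f :: "'a::real_normed_vector \<Rightarrow> real" and g :: "'a \<Rightarrow> 'b::real_normed_vector"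
  shows "bounded S \<Longrightarrow> lip S f \<Longrightarrow> lip S g \<Longrightarrow> lip S (\<lambda>x. f x *\<^sub>R g x)"
  by (rule lip_bilinear[OF bounded_bilinear_scaleR])

lemma lip_det: "bounded S \<Longrightarrow> lip S (det :: real^3^3 \<Rightarrow> real)"
  unfolding det_fun
  by (intro lip_diff lip_add lip_mult lip_entry lip_id bounded_linear_ident) auto

lemma lip_cofT: "bounded S \<Longrightarrow> lip S (\<lambda>A::real^3^3. transpose (cof A))"
proof -
  assume S: "bounded S"
  have "\<forall>i j. lip S (\<lambda>x. transpose (cof x) $ i $ j)"
    unfolding forall_3 transpose_def cof_def
    by (simp only: vec_lambda_beta vector_3; intro conjI lip_diff lip_mult lip_entry lip_id S)
  then show ?thesis by (intro lip_cart) blast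
qed

lemma lip_real_inv: assumes "c > 0" shows "lip {c..} (\<lambda>x::real. 1 / x)"
proof -
  have "(1 / c^2)-lipschitz_on {c..} (\<lambda>x::real. 1 / x)"
  proof (rule lipschitz_onI)
    fix x y :: real assume "x \<in> {c..}" "y \<in> {c..}"
    then have xy: "x \<ge> c" "y \<ge> c" by auto
    then have p: "x > 0" "y > 0" using assms by auto
    have "dist (1/x) (1/y) = \<bar>y - x\<bar> / (x * y)" using p by (simp add: dist_real_def field_simps abs_div)
    also have "\<dots> \<le> \<bar>y - x\<bar> / (c * c)"
      using p xy assms by (intro divide_left_mono mult_mono) auto
    finally show "dist (1/x) (1/y) \<le> 1 / c\<^sup>2 * dist x y"
      by (simp add: dist_real_def power2_eq_square abs_minus_commute)
  qed simp
  then show ?thesis unfolding lip_def by blast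
qed

lemma lip_powr: assumes "c > 0" shows "lip {c..B} (\<lambda>x::real. x powr r)"
proof (rule lip_deriv)
  fix x assume "x \<in> {c..B}"
  then have "x > 0" using assms by auto
  then show "((\<lambda>x. x powr r) has_derivative (*) (r * x powr (r - 1))) (at x within {c..B})"
    using has_real_derivative_powr[of x r] unfolding has_field_derivative_def
    by (blast intro: has_derivative_at_withinI)
next
  fix b :: real
  show "continuous_on {c..B} (\<lambda>x. r * x powr (r - 1) * b)"
    using assms by (intro continuous_intros) auto
qed auto

lemma det_bounds: assumes "compact K" "K \<subseteq> {A. spd A}"
  shows "\<exists>c B. c > 0 \<and> (\<forall>A\<in>K. c \<le> det A \<and> det A \<le> B)"
proof (cases "K = {}")
  case True then show ?thesis by (intro exI[of _ 1]) auto
next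
  case False
  have cd: "continuous_on K det" by (rule continuous_det)
  obtain a where a: "a \<in> K" "\<forall>y\<in>K. det a \<le> det y"
    using continuous_attains_inf[OF assms(1) False cd] by blast
  obtain b where b: "b \<in> K" "\<forall>y\<in>K. det y \<le> det b"
    using continuous_attains_sup[OF assms(1) False cd] by blast
  have "det a > 0" using a(1) assms(2) spd_det_pos by blast
  then show ?thesis using a b by blast
qed

lemma lip_minv: assumes "compact K" "K \<subseteq> {A. spd A}" shows "lip K matrix_inv"
proof -
  obtain c B where cB: "c > 0" "\<forall>A\<in>K. c \<le> det A \<and> det A \<le> B" using det_bounds[OF assms] by blast
  have bK: "bounded K" using assms(1) compact_imp_bounded by blast
  have "lip K (\<lambda>A. (1 / det A) *\<^sub>R transpose (cof A))"
  proof (rule lip_scaleR[OF bK _ lip_cofT[OF bK]])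
    show "lip K (\<lambda>A. 1 / det A)"
      by (rule lip_compose[OF lip_real_inv[OF cB(1)] lip_det[OF bK]]) (use cB in auto)
  qed
  then show ?thesis
    by (rule lip_cong) (metis matrix_inv_cof spd_det_nz assms(2) mem_Collect_eq subsetD)
qed

lemma lip_unimod: assumes "compact K" "K \<subseteq> {A. spd A}" shows "lip K unimod"
proof -
  obtain c B where cB: "c > 0" "\<forall>A\<in>K. c \<le> det A \<and> det A \<le> B" using det_bounds[OF assms] by blast
  have bK: "bounded K" using assms(1) compact_imp_bounded by blast
  have "lip K (\<lambda>A. det A powr (-1/3))"
    by (rule lip_compose[OF lip_powr[OF cB(1), of B] lip_det[OF bK]]) (use cB in auto)
  then have "lip K (\<lambda>A. det A powr (-1/3) *\<^sub>R A)" by (rule lip_scaleR[OF bK _ lip_id])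
  then show ?thesis unfolding unimod_def[abs_def] .
qed

lemma lip_ddet: assumes "compact K" "K \<subseteq> {A. spd A}" shows "lip K (\<lambda>A. det A powr (-1/3))"
proof -
  obtain c B where cB: "c > 0" "\<forall>A\<in>K. c \<le> det A \<and> det A \<le> B" using det_bounds[OF assms] by blast
  have bK: "bounded K" using assms(1) compact_imp_bounded by blast
  show ?thesis
    by (rule lip_compose[OF lip_powr[OF cB(1), of B] lip_det[OF bK]]) (use cB in auto)
qed



lemma lip_cont: "lip S f \<Longrightarrow> continuous_on S f"
  unfolding lip_def using lipschitz_on_continuous_on by blast

lemma lip_chi2: "(\<And>i j. lip S (\<lambda>x. f i j x)) \<Longrightarrow> lip S (\<lambda>x. (\<chi> i j. f i j x) :: real^3^3)"
  by (intro lip_cart) simp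

lemma lip_Psi:
  fixes Gam :: "nat \<Rightarrow> real \<Rightarrow> real^3^3"
  assumes U: "\<And>\<alpha>. \<alpha> \<in> {1..m} \<Longrightarrow> open (U \<alpha>) \<and> {A. spd A} \<subseteq> U \<alpha> \<and> Cinf_on (U \<alpha>) (G \<alpha>)"
    and Ui: "open Uinf" "{A. spd A} \<subseteq> Uinf" "Cinf_on Uinf Ginf"
    and KC: "compact KC" "KC \<subseteq> {A. spd A}"
    and KX: "compact KX" "convex KX" "KX \<subseteq> {A. spd A}" "unimod ` KC \<subseteq> KX"
    and Gam: "\<And>\<alpha>. \<alpha> \<in> {1..m} \<Longrightarrow> lip {0..T} (Gam \<alpha>)"
  shows "lip (KC \<times> ({0..T} \<times> {0..T}))
     (\<lambda>p. Siso m mu G S0 Ginf (fst p) (\<lambda>\<alpha>. (1/2) *\<^sub>R (Gam \<alpha> (fst (snd p)) + Gam \<alpha> (snd (snd p)))))"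
proof -
  define D where "D = KC \<times> ({0..T} \<times> {0..T})"
  define Xp where "Xp p = unimod (fst p)" for p :: "(real^3^3) \<times> real \<times> real"
  define Gs where "Gs p = (\<lambda>\<alpha>. (1/2) *\<^sub>R (Gam \<alpha> (fst (snd p)) + Gam \<alpha> (snd (snd p))))"
    for p :: "(real^3^3) \<times> real \<times> real"
  define St where "St p = 2 *\<^sub>R (\<chi> k l. g2 Ginf k l (Xp p) +
       (\<Sum>\<alpha>=1..m. 1 / (4 * mu \<alpha>) * (2 * (Wf mu G S0 \<alpha> (Xp p) (Gs p \<alpha>) \<bullet> DSa (G \<alpha>) (Xp p) (basis_t k l)))))"
    for p
  have bD: "bounded D" unfolding D_def
    using KC(1) by (intro compact_imp_bounded compact_Times compact_Icc) auto
  have lfst: "lip D (\<lambda>p. fst p)" by (rule lip_linear[OF bounded_linear_fst])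
  have lX: "lip D Xp" unfolding Xp_def
    by (rule lip_compose[OF lip_unimod[OF KC] lfst]) (auto simp: D_def)
  have iX: "Xp ` D \<subseteq> KX" using KX(4) by (auto simp: D_def Xp_def)
  have cX: "lip KX f \<Longrightarrow> lip D (\<lambda>p. f (Xp p))" for f :: "real^3^3 \<Rightarrow> 'b::real_normed_vector"
    by (rule lip_compose[OF _ lX iX])
  have KXU: "KX \<subseteq> U \<alpha>" if "\<alpha> \<in> {1..m}" for \<alpha> using U[OF that] KX(3) by blast
  have KXUi: "KX \<subseteq> Uinf" using Ui KX(3) by blast
  have l_ginf: "lip D (\<lambda>p. g2 Ginf k l (Xp p))" for k l
    by (rule cX, rule lip_Cinf[OF Ui(1) Cinf_g2[OF Ui(1,3)] KXUi KX(2,1)])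
  have l_g2: "lip KX (g2 (G \<alpha>) i j)" if "\<alpha> \<in> {1..m}" for \<alpha> i j
    using U[OF that] KXU[OF that] by (intro lip_Cinf[OF _ Cinf_g2 _ KX(2,1)]) auto
  have l_h: "lip KX (\<lambda>X. frechet_derivative (g2 (G \<alpha>) i j) (at X) v)" if "\<alpha> \<in> {1..m}" for \<alpha> i j v
    using U[OF that] KXU[OF that] by (intro lip_Cinf[OF _ Cinf_open_D[OF _ Cinf_g2] _ KX(2,1)]) auto
  have l_Sa: "lip D (\<lambda>p. Sa G \<alpha> (Xp p))" if "\<alpha> \<in> {1..m}" for \<alpha>
    unfolding Sa_grad by (intro lip_scale cX lip_chi2 l_g2 that)
  have l_DSa: "lip D (\<lambda>p. DSa (G \<alpha>) (Xp p) v)" if "\<alpha> \<in> {1..m}" for \<alpha> v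
    unfolding DSa_def by (intro lip_scale cX lip_chi2 l_h that)
  have l_Gam: "lip D (\<lambda>p. Gs p \<alpha>)" if "\<alpha> \<in> {1..m}" for \<alpha>
  proof -
    have a: "lip D (\<lambda>p. Gam \<alpha> (fst (snd p)))"
      by (rule lip_compose[OF Gam[OF that] lip_linear]) (auto simp: D_def intro: bounded_linear_compose bounded_linear_fst bounded_linear_snd)
    have b: "lip D (\<lambda>p. Gam \<alpha> (snd (snd p)))"
      by (rule lip_compose[OF Gam[OF that] lip_linear]) (auto simp: D_def intro: bounded_linear_compose bounded_linear_fst bounded_linear_snd)
    show ?thesis unfolding Gs_def by (intro lip_scale lip_add a b)
  qed
  have l_W: "lip D (\<lambda>p. Wf mu G S0 \<alpha> (Xp p) (Gs p \<alpha>))" if "\<alpha> \<in> {1..m}" for \<alpha>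
    unfolding Wf_def by (intro lip_diff lip_scale l_Sa l_Gam lip_const that)
  have l_St: "lip D St" unfolding St_def
    by (intro lip_scale lip_chi2 lip_add l_ginf lip_sum finite_atLeastAtMost lip_mult[OF bD] lip_const
        lip_inner[OF bD] l_W l_DSa) auto
  have l_Phi: "lip D (\<lambda>p. det (fst p) powr (-1/3) *\<^sub>R (St p - ((1/3) * (fst p \<bullet> St p)) *\<^sub>R matrix_inv (fst p)))"
  proof (intro lip_scaleR[OF bD] lip_diff l_St lip_mult[OF bD] lip_const lip_inner[OF bD] lfst)
    show "lip D (\<lambda>p. det (fst p) powr (-1/3))"
      by (rule lip_compose[OF lip_ddet[OF KC] lfst]) (auto simp: D_def)
    show "lip D (\<lambda>p. matrix_inv (fst p))"
      by (rule lip_compose[OF lip_minv[OF KC] lfst]) (auto simp: D_def)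
  qed
  have eq: "Siso m mu G S0 Ginf (fst p) (Gs p) =
      det (fst p) powr (-1/3) *\<^sub>R (St p - ((1/3) * (fst p \<bullet> St p)) *\<^sub>R matrix_inv (fst p))"
    if p: "p \<in> D" for p
  proof -
    have s: "spd (Xp p)" using p iX KX(3) by blast
    have "grad (\<lambda>Y. Giso m mu G S0 Ginf Y (Gs p)) (Xp p) = (\<chi> k l. g2 Ginf k l (Xp p) +
       (\<Sum>\<alpha>=1..m. 1 / (4 * mu \<alpha>) * (2 * (Wf mu G S0 \<alpha> (Xp p) (Gs p \<alpha>) \<bullet> DSa (G \<alpha>) (Xp p) (basis_t k l)))))"
      by (rule grad_Giso[of m U G, OF _ Ui(1) Ui(3)]) (use U s Ui(2) in blast)+
    then show ?thesis
      unfolding Siso_eq sisoG_def Let_def St_def Xp_def by simp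
  qed
  have "lip D (\<lambda>p. Siso m mu G S0 Ginf (fst p) (Gs p))"
    by (rule lip_cong[OF l_Phi]) (simp add: eq)
  then show ?thesis unfolding D_def Gs_def .
qed



theorem proposition2:
  fixes T :: real and m :: nat and mu eta :: "nat \<Rightarrow> real"
    and S0 :: "nat \<Rightarrow> real^3^3" and G :: "nat \<Rightarrow> real^3^3 \<Rightarrow> real"
    and Ginf :: "real^3^3 \<Rightarrow> real" and C :: "real \<Rightarrow> real^3^3"
    and Gam :: "nat \<Rightarrow> real \<Rightarrow> real^3^3"
  assumes "T > 0" and "m \<ge> 1"
    and "\<forall>\<alpha>\<in>{1..m}. mu \<alpha> > 0 \<and> eta \<alpha> > 0 \<and> sym_tensor (S0 \<alpha>) \<and> smooth_spd (G \<alpha>)"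
    and "smooth_spd Ginf"
    and "Cinf_on {0..T} C" and "\<forall>t\<in>{0..T}. spd (C t)"
    and "\<forall>\<alpha>\<in>{1..m}. sym_tensor (Gam \<alpha> 0) \<and>
          (\<forall>t\<in>{0..T}. (Gam \<alpha> has_vector_derivative
              ((1 / eta \<alpha>) *\<^sub>R (Sa G \<alpha> (unimod (C t)) - S0 \<alpha> - mu \<alpha> *\<^sub>R (Gam \<alpha> t - mat 1))))
            (at t within {0..T}))"
  shows "\<exists>K>0. \<exists>\<delta>>0. \<forall>tn dt. 0 \<le> tn \<longrightarrow> tn < T \<longrightarrow> 0 < dt \<longrightarrow> dt \<le> T - tn \<longrightarrow> dt \<le> \<delta> \<longrightarrow>
           norm (Senh1 m mu G S0 Ginf C Gam tn dt) \<le> K * dt"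
proof -
  note a = assms
  have "\<forall>\<alpha>\<in>{1..m}. \<exists>U. open U \<and> {A. spd A} \<subseteq> U \<and> Cinf_on U (G \<alpha>)"
    using a(3) unfolding smooth_spd_def by blast
  from bchoice[OF this] obtain U where U: "\<forall>\<alpha>\<in>{1..m}. open (U \<alpha>) \<and> {A. spd A} \<subseteq> U \<alpha> \<and> Cinf_on (U \<alpha>) (G \<alpha>)"
    by (rule exE)
  then have U': "\<And>\<alpha>. \<alpha> \<in> {1..m} \<Longrightarrow> open (U \<alpha>) \<and> {A. spd A} \<subseteq> U \<alpha> \<and> Cinf_on (U \<alpha>) (G \<alpha>)" by blast
  obtain Uinf where Ui: "open Uinf" "{A. spd A} \<subseteq> Uinf" "Cinf_on Uinf Ginf"
    using a(4) unfolding smooth_spd_def by blast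
  have cC: "continuous_on {0..T} C" by (rule Cinf_cont[OF a(5)])
  have lC: "lip {0..T} C" by (rule lip_Cinf_within[OF a(5)]) auto
  then obtain LC where LC: "LC-lipschitz_on {0..T} C" unfolding lip_def by blast
  define KC where "KC = convex hull (C ` {0..T})"
  have KC3: "KC \<subseteq> {A. spd A}"
    unfolding KC_def by (rule hull_minimal) (use a(6) spd_convex in auto)
  have KC: "compact KC" "convex KC" "KC \<subseteq> {A. spd A}"
    unfolding KC_def
    by (auto intro!: compact_convex_hull compact_continuous_image cC KC3[unfolded KC_def])
  have CKC: "C t \<in> KC" if "t \<in> {0..T}" for t
    unfolding KC_def using that by (intro hull_inc imageI)
  have lU: "lip KC unimod" by (rule lip_unimod[OF KC(1,3)])
  define KX where "KX = convex hull (unimod ` KC)"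
  have KX: "compact KX" "convex KX" "KX \<subseteq> {A. spd A}" "unimod ` KC \<subseteq> KX"
  proof -
    show "compact KX" unfolding KX_def by (intro compact_convex_hull compact_continuous_image lip_cont lU KC(1))
    show "convex KX" unfolding KX_def by simp
    show "KX \<subseteq> {A. spd A}" unfolding KX_def
      by (rule hull_minimal) (use KC(3) unimod_spd spd_convex in auto)
    show "unimod ` KC \<subseteq> KX" unfolding KX_def by (rule hull_subset)
  qed
  have lGam: "lip {0..T} (Gam \<alpha>)" if al: "\<alpha> \<in> {1..m}" for \<alpha>
  proof -
    define V where "V t = (1 / eta \<alpha>) *\<^sub>R (Sa G \<alpha> (unimod (C t)) - S0 \<alpha> - mu \<alpha> *\<^sub>R (Gam \<alpha> t - mat 1))" for t
    have hd: "(Gam \<alpha> has_vector_derivative V t) (at t within {0..T})" if "t \<in> {0..T}" for t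
      using a(7) al that unfolding V_def by blast
    have cG: "continuous_on {0..T} (Gam \<alpha>)"
      using hd has_vector_derivative_continuous continuous_on_eq_continuous_within by blast
    have uo: "open (U \<alpha>)" "{A. spd A} \<subseteq> U \<alpha>" "Cinf_on (U \<alpha>) (G \<alpha>)" using U'[OF al] by auto
    have lg2: "lip KX (g2 (G \<alpha>) i j)" for i j
      by (rule lip_Cinf[OF uo(1) Cinf_g2[OF uo(1,3)] _ KX(2,1)]) (use uo(2) KX(3) in blast)
    have lSa: "lip KX (Sa G \<alpha>)"
      unfolding Sa_grad by (intro lip_scale lip_chi2 lg2)
    have "lip {0..T} (\<lambda>t. Sa G \<alpha> (unimod (C t)))"
      by (rule lip_compose[OF lSa lip_compose[OF lU lC]]) (use CKC KX(4) in auto)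
    then have cV: "continuous_on {0..T} V"
      unfolding V_def by (intro continuous_intros lip_cont cG)
    show ?thesis
    proof (rule lip_deriv[of "{0..T}" "Gam \<alpha>" "\<lambda>t h. h *\<^sub>R V t"])
      show "((Gam \<alpha>) has_derivative (\<lambda>h. h *\<^sub>R V x)) (at x within {0..T})" if "x \<in> {0..T}" for x
        using hd[OF that] unfolding has_vector_derivative_def .
      show "continuous_on {0..T} (\<lambda>x. b *\<^sub>R V x)" for b by (intro continuous_intros cV)
    qed auto
  qed
  define Psi where "Psi p = Siso m mu G S0 Ginf (fst p) (\<lambda>\<alpha>. (1/2) *\<^sub>R (Gam \<alpha> (fst (snd p)) + Gam \<alpha> (snd (snd p))))"
    for p :: "(real^3^3) \<times> real \<times> real"
  have "lip (KC \<times> ({0..T} \<times> {0..T})) Psi"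
    unfolding Psi_def[abs_def]
    by (rule lip_Psi[OF U' Ui KC(1,3) KX lGam])
  then obtain LP where LP: "LP-lipschitz_on (KC \<times> ({0..T} \<times> {0..T})) Psi" unfolding lip_def by blast
  have LP0: "LP \<ge> 0" "LC \<ge> 0" using LP LC lipschitz_on_nonneg by blast+
  define K where "K = LP * (LC + 1) + 1"
  have K0: "K > 0" unfolding K_def using LP0 by (simp add: add_nonneg_pos)
  have main: "norm (Senh1 m mu G S0 Ginf C Gam tn dt) \<le> K * dt"
    if h: "0 \<le> tn" "tn < T" "0 < dt" "dt \<le> T - tn" for tn dt
  proof -
    define t1 where "t1 = tn + dt"
    have t: "tn \<in> {0..T}" "t1 \<in> {0..T}" using h by (auto simp: t1_def)
    define C0 where "C0 = C tn"
    define C1 where "C1 = C t1"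
    define Z where "Z = (1/2) *\<^sub>R (C1 - C0)"
    define Gn1 where "Gn1 = (\<lambda>\<alpha>. Gam \<alpha> t1)"
    define Gh where "Gh = (\<lambda>\<alpha>. (1/2) *\<^sub>R (Gam \<alpha> tn + Gam \<alpha> t1))"
    define Ch where "Ch = (1/2) *\<^sub>R (C0 + C1)"
    define g where "g = (\<lambda>X. Giso m mu G S0 Ginf X Gn1)"
    have S: "Senh1 m mu G S0 Ginf C Gam tn dt = (if Z = 0 then 0 else
       ((g (unimod C1) - g (unimod C0) - Siso m mu G S0 Ginf Ch Gh \<bullet> Z) / (norm Z)\<^sup>2) *\<^sub>R Z)"
      unfolding Senh1_def Let_def Z_def C0_def C1_def t1_def g_def Gn1_def Gh_def Ch_def by simp
    have CK: "C0 \<in> KC" "C1 \<in> KC" using CKC t by (auto simp: C0_def C1_def)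
    have nC: "norm (C1 - C0) \<le> LC * dt"
      using lipschitz_onD[OF LC t(2) t(1)] h(3) by (simp add: dist_norm C0_def C1_def t1_def)
    show ?thesis
    proof (cases "Z = 0")
      case True then show ?thesis using S K0 h by simp
    next
      case False
      define Cs where "Cs s = C0 + s *\<^sub>R (C1 - C0)" for s
      have CsK: "Cs s \<in> KC" if "s \<in> {0..1}" for s
      proof -
        have "Cs s = (1 - s) *\<^sub>R C0 + s *\<^sub>R C1" unfolding Cs_def by (simp add: algebra_simps)
        then show ?thesis using convexD[OF KC(2) CK, of "1 - s" s] that by simp
      qed
      have gd: "g differentiable (at (unimod A))" if "A \<in> KC" for A
      proof -
        have s: "spd (unimod A)" using that KC(3) unimod_spd by blast
        have c1: "open (U \<alpha>) \<and> Cinf_on (U \<alpha>) (G \<alpha>) \<and> unimod A \<in> U \<alpha>" if "\<alpha> \<in> {1..m}" for \<alpha>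
          using U'[OF that] s by blast
        have c2: "unimod A \<in> Uinf" using Ui s by blast
        show ?thesis
          using Giso_deriv[of m U G "unimod A" Uinf Ginf mu S0 Gn1, OF c1 Ui(1) Ui(3) c2]
          unfolding g_def differentiable_def by blast
      qed
      have pd: "((\<lambda>s. g (unimod (Cs s))) has_derivative (\<lambda>h. (1/2) * (sisoG g (Cs s) \<bullet> (h *\<^sub>R (C1 - C0)))))
          (at s within {0..1})" if s: "0 \<le> s" "s \<le> 1" for s
      proof -
        have l: "(Cs has_derivative (\<lambda>h. h *\<^sub>R (C1 - C0))) (at s)"
          unfolding Cs_def[abs_def] by (auto intro!: derivative_eq_intros)
        have sp: "spd (Cs s)" using CsK[of s] s KC(3) by auto
        have "((\<lambda>s. g (unimod (Cs s))) has_derivative (\<lambda>h. (1/2) * (sisoG g (Cs s) \<bullet> (h *\<^sub>R (C1 - C0))))) (at s)"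
          using has_derivative_compose[OF l F_deriv[OF sp gd[OF CsK]]] s by (simp add: o_def)
        then show ?thesis by (rule has_derivative_at_withinI)
      qed
      obtain xi where xi: "xi \<in> {0<..<1}"
        "g (unimod (Cs 1)) - g (unimod (Cs 0)) = (1/2) * (sisoG g (Cs xi) \<bullet> ((1 - 0) *\<^sub>R (C1 - C0)))"
        using mvt_simple[OF zero_less_one pd] by blast
      have diff: "g (unimod C1) - g (unimod C0) = sisoG g (Cs xi) \<bullet> Z"
        using xi(2) unfolding Cs_def Z_def by simp
      define N where "N = g (unimod C1) - g (unimod C0) - Siso m mu G S0 Ginf Ch Gh \<bullet> Z"
      have Neq: "N = (sisoG g (Cs xi) - Siso m mu G S0 Ginf Ch Gh) \<bullet> Z"
        unfolding N_def diff by (simp add: inner_diff_left)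
      have e1: "sisoG g (Cs xi) = Psi (Cs xi, t1, t1)"
      proof -
        have "(\<lambda>\<alpha>. (1/2) *\<^sub>R (Gam \<alpha> t1 + Gam \<alpha> t1)) = Gn1"
          unfolding Gn1_def by (simp add: scaleR_add_right[symmetric])
        then show ?thesis unfolding Psi_def g_def Siso_eq by simp
      qed
      have e2: "Siso m mu G S0 Ginf Ch Gh = Psi (Ch, tn, t1)"
        unfolding Psi_def Gh_def by simp
      have ChK: "Ch \<in> KC" unfolding Ch_def using convexD[OF KC(2) CK, of "1/2" "1/2"] by (simp add: scaleR_add_right)
      have xiK: "Cs xi \<in> KC" using CsK xi(1) by auto
      have dPsi: "norm (Psi (Cs xi, t1, t1) - Psi (Ch, tn, t1)) \<le> LP * dist (Cs xi, t1, t1) (Ch, tn, t1)"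
        using lipschitz_onD[OF LP, of "(Cs xi, t1, t1)" "(Ch, tn, t1)"] xiK ChK t by (simp add: dist_norm)
      have "Cs xi - Ch = (xi - 1/2) *\<^sub>R (C1 - C0)"
        unfolding Cs_def Ch_def by (simp add: vec_eq_iff field_simps)
      then have "norm (Cs xi - Ch) = \<bar>xi - 1/2\<bar> * norm (C1 - C0)" by simp
      also have "\<dots> \<le> 1 * norm (C1 - C0)" using xi(1) by (intro mult_right_mono) auto
      finally have nCs: "norm (Cs xi - Ch) \<le> LC * dt" using nC by simp
      have "dist (Cs xi, t1, t1) (Ch, tn, t1) = norm (Cs xi - Ch, t1 - tn, 0::real)"
        by (simp add: dist_norm)
      also have "\<dots> \<le> norm (Cs xi - Ch) + norm (t1 - tn, 0::real)" by (rule norm_Pair_le)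
      also have "norm (t1 - tn, 0::real) = dt" using h(3) by (simp add: norm_Pair t1_def)
      finally have dd: "dist (Cs xi, t1, t1) (Ch, tn, t1) \<le> (LC + 1) * dt" using nCs by (simp add: algebra_simps)
      have "norm (Senh1 m mu G S0 Ginf C Gam tn dt) = \<bar>N\<bar> / norm Z"
        using False unfolding S N_def[symmetric] by (simp add: power2_eq_square)
      also have "\<dots> \<le> norm (sisoG g (Cs xi) - Siso m mu G S0 Ginf Ch Gh)"
      proof -
        have "\<bar>N\<bar> \<le> norm (sisoG g (Cs xi) - Siso m mu G S0 Ginf Ch Gh) * norm Z"
          unfolding Neq by (rule Cauchy_Schwarz_ineq2)
        then show ?thesis using False by (simp add: divide_le_eq)
      qed
      also have "\<dots> \<le> LP * ((LC + 1) * dt)"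
        unfolding e1 e2 using dPsi dd LP0 by (meson mult_left_mono order_trans)
      also have "\<dots> \<le> K * dt" unfolding K_def using h(3) by (simp add: algebra_simps)
      finally show ?thesis .
    qed
  qed
  show ?thesis
    by (rule exI[of _ K], rule conjI[OF K0], rule exI[of _ 1], rule conjI[OF zero_less_one]) (use main in blast)
qed

end
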